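(* Let $(X,d,A)$ be a metric pair with $A$ not isolated and let $p\in[1,\infty]$. Then $(D(X,A),W_p)$ and $(\overline{D}_p(X,A),W_p)$ are not hemicompact.
   Context: A metric on $X$ is a map $d:X\times X\to[0,\infty]$ with $d(x,x)=0$, symmetry and the triangle inequality (infinite distances allowed, $d(x,y)=0$ need not imply $x=y$); a metric pair $(X,d,A)$ is such a space with a closed subset $A$. Write $d(x,A)=\inf_{a\in A}d(x,a)$, $A^\delta=\{x:d(x,A)<\delta\}$ for $\delta\in(0,\infty]$; $A$ is isolated if $A^\delta=A$ for some $\delta>0$. $\overline{D}(X,A)$ is the set of countable formal sums $\hat\alpha=\sum_{i\in I}x_i$ of points of $X\setminus A$ (repetitions allowed); $D(X,A)$ the finite ones; $0$ the empty sum. A matching of $\hat\alpha=\sum_{i\in I}x_i$, $\hat\beta=\sum_{j\in J}y_j$ is a formal sum $\sum_{k\in K}(x_k,y_{\varphi(k)})+\sum_{i\in I\setminus K}(x_i,z_i)+\sum_{j\in J\setminus\varphi(K)}(w_j,y_j)$ with $K\subset I$, $\varphi$ injective, $z_i,w_j\in A$; its $p$-cost is the $\ell^p$ norm (sup norm if $p=\infty$) of the distances of paired points; $W_p$ is the infimum of $p$-costs. $u_\delta(\alpha)$, $\ell_\delta(\alpha)$ are the restrictions of $\hat\alpha$ to $X\setminus A^\delta$ and to $A^\delta\setminus A$. For $p<\infty$, $\overline{D}_p(X,A)=\{\alpha: |u_\infty(\alpha)|<\infty,\ W_p(\ell_\infty(\alpha),0)<\infty\}$; $\overline{D}_\infty(X,A)=\{\alpha:|u_\delta(\alpha)|<\infty\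 \forall\delta>0\}$. A topological space is hemicompact if it has a sequence of compact subsets $K_1,K_2,\dots$ such that every compact subset of the space is contained in some $K_n$. *)

theory Defs
  imports "HOL-Analysis.Analysis"
begin

definition ext_metric :: "('a \<Rightarrow> 'a \<Rightarrow> ennreal) \<Rightarrow> bool" where
  "ext_metric d \<longleftrightarrow> (\<forall>x. d x x = 0) \<and> (\<forall>x y. d x y = d y x)
     \<and> (\<forall>x y z. d x z \<le> d x y + d y z)"

definition dist_topology :: "'b set \<Rightarrow> ('b \<Rightarrow> 'b \<Rightarrow> ennreal) \<Rightarrow> 'b topology" where
  "dist_topology S \<rho> = topology (\<lambda>U. U \<subseteq> S \<and> (\<forall>x\<in>U. \<exists>e>0. {y\<in>S. \<rho> x y < e} \<subseteq> U))"

definition setdist :: "('a \<Rightarrow> 'a \<Rightarrow> ennreal) \<Rightarrow> 'a \<Rightarrow> 'a set \<Rightarrow> ennreal" where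
  "setdist d x A = (INF a\<in>A. d x a)"

definition thick :: "('a \<Rightarrow> 'a \<Rightarrow> ennreal) \<Rightarrow> 'a set \<Rightarrow> ennreal \<Rightarrow> 'a set" where
  "thick d A \<delta> = {x. setdist d x A < \<delta>}"

definition isolated_set :: "('a \<Rightarrow> 'a \<Rightarrow> ennreal) \<Rightarrow> 'a set \<Rightarrow> bool" where
  "isolated_set d A \<longleftrightarrow> (\<exists>\<delta>>0. thick d A \<delta> = A)"

definition metric_pair :: "('a \<Rightarrow> 'a \<Rightarrow> ennreal) \<Rightarrow> 'a set \<Rightarrow> bool" where
  "metric_pair d A \<longleftrightarrow> ext_metric d \<and> closedin (dist_topology UNIV d) A"

definition hemicompact :: "'b topology \<Rightarrow> bool" where
  "hemicompact T \<longleftrightarrow> (\<exists>K :: nat \<Rightarrow> 'b set. (\<forall>n. compactin T (K n))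
      \<and> (\<forall>C. compactin T C \<longrightarrow> (\<exists>n. C \<subseteq> K n)))"

definition usum :: "('b \<Rightarrow> 'c::{complete_lattice, comm_monoid_add}) \<Rightarrow> 'b set \<Rightarrow> 'c" where
  "usum f S = (SUP F\<in>{F. finite F \<and> F \<subseteq> S}. sum f F)"

text \<open>A countable formal sum of points (repetitions allowed) is represented by its
  multiplicity function, with values in {0,1,2,...,\<infinity>} and countable support.\<close>
type_synonym 'a fsum = "'a \<Rightarrow> enat"

definition supp :: "'a fsum \<Rightarrow> 'a set" where
  "supp \<alpha> = {x. \<alpha> x \<noteq> 0}"

definition Dbar :: "'a set \<Rightarrow> 'a fsum set" where
  "Dbar A = {\<alpha>. countable (supp \<alpha>) \<and> supp \<alpha> \<subseteq> - A}"

definition Dfin :: "'a set \<Rightarrow> 'a fsum set" where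
  "Dfin A = {\<alpha>\<in>Dbar A. finite (supp \<alpha>) \<and> (\<forall>x. \<alpha> x \<noteq> \<infinity>)}"

definition zero_diag :: "'a fsum" where
  "zero_diag = (\<lambda>_. 0)"

definition card_diag :: "'a fsum \<Rightarrow> enat" where
  "card_diag \<alpha> = usum \<alpha> UNIV"

definition restrict_diag :: "'a fsum \<Rightarrow> 'a set \<Rightarrow> 'a fsum" where
  "restrict_diag \<alpha> S = (\<lambda>x. if x \<in> S then \<alpha> x else 0)"

definition u_part :: "('a \<Rightarrow> 'a \<Rightarrow> ennreal) \<Rightarrow> 'a set \<Rightarrow> ennreal \<Rightarrow> 'a fsum \<Rightarrow> 'a fsum" where
  "u_part d A \<delta> \<alpha> = restrict_diag \<alpha> (- thick d A \<delta>)"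

definition l_part :: "('a \<Rightarrow> 'a \<Rightarrow> ennreal) \<Rightarrow> 'a set \<Rightarrow> ennreal \<Rightarrow> 'a fsum \<Rightarrow> 'a fsum" where
  "l_part d A \<delta> \<alpha> = restrict_diag \<alpha> (thick d A \<delta> - A)"

text \<open>A matching of \<alpha> and \<beta> is a countable formal sum of pairs (again given by
  multiplicities) such that no pair has both coordinates in A, the coordinates
  outside A of first components form \<alpha>, and those of second components form \<beta>.
  (First coordinates in A are the z_i, second coordinates in A are the w_j.)\<close>
definition is_matching :: "'a set \<Rightarrow> 'a fsum \<Rightarrow> 'a fsum \<Rightarrow> ('a \<times> 'a) fsum \<Rightarrow> bool" where
  "is_matching A \<alpha> \<beta> \<mu> \<longleftrightarrow> countable (supp \<mu>)
     \<and> (\<forall>x y. \<mu> (x, y) \<noteq> 0 \<longrightarrow> \<not> (x \<in> A \<and> y \<in> A))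
     \<and> (\<forall>x. x \<notin> A \<longrightarrow> usum (\<lambda>y. \<mu> (x, y)) UNIV = \<alpha> x)
     \<and> (\<forall>y. y \<notin> A \<longrightarrow> usum (\<lambda>x. \<mu> (x, y)) UNIV = \<beta> y)"

definition enn_powr :: "ennreal \<Rightarrow> real \<Rightarrow> ennreal" where
  "enn_powr x r = (if x = top then top else ennreal (enn2real x powr r))"

definition match_cost :: "ennreal \<Rightarrow> ('a \<Rightarrow> 'a \<Rightarrow> ennreal) \<Rightarrow> ('a \<times> 'a) fsum \<Rightarrow> ennreal" where
  "match_cost p d \<mu> =
     (if p = top then (SUP z\<in>supp \<mu>. d (fst z) (snd z))
      else enn_powr (usum (\<lambda>z. ennreal_of_enat (\<mu> z) * enn_powr (d (fst z) (snd z)) (enn2real p)) UNIV)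
                    (1 / enn2real p))"

definition W :: "ennreal \<Rightarrow> ('a \<Rightarrow> 'a \<Rightarrow> ennreal) \<Rightarrow> 'a set \<Rightarrow> 'a fsum \<Rightarrow> 'a fsum \<Rightarrow> ennreal" where
  "W p d A \<alpha> \<beta> = (INF \<mu>\<in>{\<mu>. is_matching A \<alpha> \<beta> \<mu>}. match_cost p d \<mu>)"

definition Dbar_p :: "ennreal \<Rightarrow> ('a \<Rightarrow> 'a \<Rightarrow> ennreal) \<Rightarrow> 'a set \<Rightarrow> 'a fsum set" where
  "Dbar_p p d A =
     (if p = top then {\<alpha>\<in>Dbar A. \<forall>\<delta>>0. card_diag (u_part d A \<delta> \<alpha>) < \<infinity>}
      else {\<alpha>\<in>Dbar A. card_diag (u_part d A top \<alpha>) < \<infinity>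
                        \<and> W p d A (l_part d A top \<alpha>) zero_diag < top})"

end

theory Submission
  imports Defs
begin


lemma dt_istop: fixes \<rho> :: "'b \<Rightarrow> 'b \<Rightarrow> ennreal" shows "istopology (\<lambda>U. U \<subseteq> S \<and> (\<forall>x\<in>U. \<exists>e>0. {y\<in>S. \<rho> x y < e} \<subseteq> U))"
proof -
  have 1: "U \<inter> V \<subseteq> S \<and> (\<forall>x\<in>U \<inter> V. \<exists>e>0. {y\<in>S. \<rho> x y < e} \<subseteq> U \<inter> V)"
    if u: "U \<subseteq> S \<and> (\<forall>x\<in>U. \<exists>e>0. {y\<in>S. \<rho> x y < e} \<subseteq> U)"
    and v: "V \<subseteq> S \<and> (\<forall>x\<in>V. \<exists>e>0. {y\<in>S. \<rho> x y < e} \<subseteq> V)" for U V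
  proof (intro conjI ballI)
    show "U \<inter> V \<subseteq> S" using u by auto
    fix x assume "x \<in> U \<inter> V"
    then obtain e1 e2 where "e1>0" "{y\<in>S. \<rho> x y < e1} \<subseteq> U" "e2>0" "{y\<in>S. \<rho> x y < e2} \<subseteq> V"
      using u v by blast
    then show "\<exists>e>0. {y\<in>S. \<rho> x y < e} \<subseteq> U \<inter> V"
      by (intro exI[of _ "min e1 e2"]) (auto simp: min_less_iff_conj)
  qed
  have 2: "\<Union>K \<subseteq> S \<and> (\<forall>x\<in>\<Union>K. \<exists>e>0. {y\<in>S. \<rho> x y < e} \<subseteq> \<Union>K)"
    if H: "\<forall>U\<in>K. U \<subseteq> S \<and> (\<forall>x\<in>U. \<exists>e>0. {y\<in>S. \<rho> x y < e} \<subseteq> U)" for K :: "'b set set"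
  proof (intro conjI ballI)
    show "\<Union>K \<subseteq> S" using H by auto
    fix x assume "x \<in> \<Union>K"
    then obtain U where "U \<in> K" "x \<in> U" by auto
    have "\<forall>x\<in>U. \<exists>e>0. {y\<in>S. \<rho> x y < e} \<subseteq> U" using H \<open>U \<in> K\<close> by simp
    then obtain e where "e>0" "{y\<in>S. \<rho> x y < e} \<subseteq> U" using \<open>x \<in> U\<close> by blast
    then show "\<exists>e>0. {y\<in>S. \<rho> x y < e} \<subseteq> \<Union>K" using \<open>U \<in> K\<close> by auto
  qed
  show ?thesis unfolding istopology_def
    apply (rule conjI)
     apply (intro allI impI) apply (rule 1; assumption)
    apply (intro allI impI) apply (rule 2; assumption)
    done
qed

lemma openin_dt: fixes \<rho> :: "'b \<Rightarrow> 'b \<Rightarrow> ennreal" shows "openin (dist_topology S \<rho>) U \<longleftrightarrow> U \<subseteq> S \<and> (\<forall>x\<in>U. \<exists>e>0. {y\<in>S. \<rho> x y < e} \<subseteq> U)"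
  unfolding dist_topology_def using dt_istop[of S \<rho>] by (simp add: topology_inverse')

lemma topspace_dt: fixes \<rho> :: "'b \<Rightarrow> 'b \<Rightarrow> ennreal" shows "topspace (dist_topology S \<rho>) = S"
proof -
  have "openin (dist_topology S \<rho>) S" unfolding openin_dt by (auto intro: exI[of _ 1])
  then show ?thesis unfolding topspace_def using openin_dt[of S \<rho>] by auto
qed

lemma not_hemi_abstract:
  assumes z: "z \<in> S"
    and H: "\<And>e K. e > 0 \<Longrightarrow> compactin (dist_topology S \<rho>) K \<Longrightarrow> (\<exists>\<alpha>\<in>S. \<rho> z \<alpha> < e \<and> \<alpha> \<notin> K)"
  shows "\<not> hemicompact (dist_topology S \<rho>)"
proof
  assume "hemicompact (dist_topology S \<rho>)"
  then obtain K :: "nat \<Rightarrow> _" where K: "\<And>n. compactin (dist_topology S \<rho>) (K n)"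
    and C: "\<And>C. compactin (dist_topology S \<rho>) C \<Longrightarrow> \<exists>n. C \<subseteq> K n"
    unfolding hemicompact_def by blast
  have "\<forall>n. \<exists>\<alpha>\<in>S. \<rho> z \<alpha> < ennreal (1 / Suc n) \<and> \<alpha> \<notin> K n"
  proof
    fix n
    have "ennreal (1 / Suc n) > 0" by (simp del: of_nat_Suc)
    then show "\<exists>\<alpha>\<in>S. \<rho> z \<alpha> < ennreal (1 / Suc n) \<and> \<alpha> \<notin> K n" using H[OF _ K] by blast
  qed
  then obtain \<alpha> where al: "\<And>n. \<alpha> n \<in> S" "\<And>n. \<rho> z (\<alpha> n) < ennreal (1 / Suc n)" "\<And>n. \<alpha> n \<notin> K n"
    by metis
  have "compactin (dist_topology S \<rho>) (insert z (range \<alpha>))"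
    unfolding compactin_def topspace_dt
  proof (intro conjI allI impI)
    show "insert z (range \<alpha>) \<subseteq> S" using z al by auto
    fix U assume U: "(\<forall>B\<in>U. openin (dist_topology S \<rho>) B) \<and> insert z (range \<alpha>) \<subseteq> \<Union> U"
    then obtain B where B: "B \<in> U" "z \<in> B" by auto
    then obtain e where e: "e > 0" "{y\<in>S. \<rho> z y < e} \<subseteq> B"
      using U B(1) B(2) unfolding openin_dt by blast
    obtain N :: nat where N: "ennreal (1 / Suc N) < e"
    proof (cases "e = top")
      case True then show ?thesis using that[of 0] by simp
    next
      case False
      then have ep: "enn2real e > 0" using e by (simp add: enn2real_positive_iff less_top)
      then obtain N :: nat where N: "1 / Suc N < enn2real e"
        using nat_approx_posE by blast
      have "ennreal (1 / Suc N) < ennreal (enn2real e)" using N by (subst ennreal_less_iff) auto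
      moreover have "ennreal (enn2real e) = e" using False by (simp add: less_top)
      ultimately show ?thesis using that[of N] by simp
    qed
    have "\<forall>n\<in>{N..}. \<alpha> n \<in> B"
    proof
      fix n assume "n \<in> {N..}"
      then have "ennreal (1 / Suc n) \<le> ennreal (1 / Suc N)"
        by (intro ennreal_leI) (auto simp: frac_le)
      then have "\<rho> z (\<alpha> n) < e" using al(2)[of n] N
        by (meson order.strict_trans order_less_le_trans)
      then show "\<alpha> n \<in> B" using e al(1) by auto
    qed
    have "\<forall>n\<in>{..<N}. \<exists>Bn\<in>U. \<alpha> n \<in> Bn"
    proof
      fix n
      have "\<alpha> n \<in> insert z (range \<alpha>)" by simp
      then have "\<alpha> n \<in> \<Union>U" using U by blast
      then show "\<exists>Bn\<in>U. \<alpha> n \<in> Bn" by blast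
    qed
    then obtain f where f: "\<And>n. n \<in> {..<N} \<Longrightarrow> f n \<in> U \<and> \<alpha> n \<in> f n" by metis
    show "\<exists>F. finite F \<and> F \<subseteq> U \<and> insert z (range \<alpha>) \<subseteq> \<Union> F"
    proof (intro exI[of _ "insert B (f ` {..<N})"] conjI)
      show "finite (insert B (f ` {..<N}))" by simp
      show "insert B (f ` {..<N}) \<subseteq> U" using B f by auto
      show "insert z (range \<alpha>) \<subseteq> \<Union> (insert B (f ` {..<N}))"
      proof
        fix x assume "x \<in> insert z (range \<alpha>)"
        then consider "x = z" | n where "x = \<alpha> n" by auto
        then show "x \<in> \<Union> (insert B (f ` {..<N}))"
        proof cases
          case 1 then show ?thesis using B by auto
        next
          case (2 n) then show ?thesis
            using f[of n] \<open>\<forall>n\<in>{N..}. \<alpha> n \<in> B\<close> by (cases "n < N") auto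
        qed
      qed
    qed
  qed
  then obtain n where "insert z (range \<alpha>) \<subseteq> K n" using C by blast
  then show False using al(3)[of n] by auto
qed

lemma not_lc_abstract:
  fixes \<alpha> :: "nat \<Rightarrow> 'b" and Op :: "nat \<Rightarrow> 'b set" and \<rho> :: "'b \<Rightarrow> 'b \<Rightarrow> ennreal"
  assumes al: "\<And>j. \<alpha> j \<in> S" "\<And>j. \<rho> z (\<alpha> j) < e"
    and Op: "\<And>i. openin (dist_topology S \<rho>) (Op i)" and cov: "S \<subseteq> (\<Union>i. Op i)"
    and sep: "\<And>i j. i \<le> j \<Longrightarrow> \<alpha> j \<notin> Op i"
    and K: "compactin (dist_topology S \<rho>) K"
  shows "\<exists>\<beta>\<in>S. \<rho> z \<beta> < e \<and> \<beta> \<notin> K"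
proof (rule ccontr)
  assume "\<not> ?thesis"
  then have sub: "range \<alpha> \<subseteq> K" using al by auto
  have "K \<subseteq> \<Union> (range Op)" using K cov unfolding compactin_def topspace_dt by auto
  then obtain F where F: "finite F" "F \<subseteq> range Op" "K \<subseteq> \<Union>F"
    using K Op unfolding compactin_def by (metis imageE)
  then obtain I where I: "finite I" "F = Op ` I" by (meson finite_subset_image)
  define j where "j = Max (insert 0 I)"
  have "\<alpha> j \<in> K" using sub by auto
  then have "\<alpha> j \<in> \<Union>F" using F(3) by blast
  then obtain i where "i \<in> I" "\<alpha> j \<in> Op i" using I by auto
  moreover have "i \<le> j" using \<open>i \<in> I\<close> I unfolding j_def by simp
  ultimately show False using sep by blast
qed



lemma usum_ge: "finite F \<Longrightarrow> F \<subseteq> S \<Longrightarrow> sum f F \<le> usum f S"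
  unfolding usum_def by (rule SUP_upper) auto

lemma usum_le: "(\<And>F. finite F \<Longrightarrow> F \<subseteq> S \<Longrightarrow> sum f F \<le> B) \<Longrightarrow> usum f S \<le> B"
  unfolding usum_def by (rule SUP_least) auto

lemma usum_finite_supp:
  fixes f :: "'b \<Rightarrow> 'c::{complete_lattice, canonically_ordered_monoid_add}"
  assumes "finite F0" "\<And>z. z \<notin> F0 \<Longrightarrow> f z = 0"
  shows "usum f UNIV = sum f F0"
proof (rule antisym)
  show "usum f UNIV \<le> sum f F0"
  proof (rule usum_le)
    fix F :: "'b set" assume F: "finite F"
    have "sum f F = sum f (F \<inter> F0)"
      using F assms(2) by (intro sum.mono_neutral_right) auto
    also have "\<dots> \<le> sum f F0" using assms(1) by (intro sum_mono2) auto
    finally show "sum f F \<le> sum f F0" .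
  qed
  show "sum f F0 \<le> usum f UNIV" using assms(1) by (rule usum_ge) auto
qed

lemma usum_single:
  fixes f :: "'b \<Rightarrow> 'c::{complete_lattice, canonically_ordered_monoid_add}"
  assumes "\<And>z. z \<noteq> z0 \<Longrightarrow> f z = 0"
  shows "usum f UNIV = f z0"
  using usum_finite_supp[of "{z0}" f] assms by auto

lemma usum_zero: "usum (\<lambda>_. 0::'c::{complete_lattice, canonically_ordered_monoid_add}) UNIV = 0"
  using usum_single[of undefined "\<lambda>_. 0::'c"] by simp

lemma usum_enat_ge:
  fixes f :: "'b \<Rightarrow> enat"
  assumes "enat n \<le> usum f S"
  shows "\<exists>F. finite F \<and> F \<subseteq> S \<and> enat n \<le> sum f F"
proof (cases n)
  case 0 then show ?thesis by (intro exI[of _ "{}"]) (simp add: zero_enat_def)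
next
  case (Suc m)
  then have "enat m < usum f S" using assms Suc_ile_eq by blast
  then obtain F where "F \<in> {F. finite F \<and> F \<subseteq> S}" "enat m < sum f F"
    unfolding usum_def by (auto simp: less_SUP_iff)
  then show ?thesis using Suc Suc_ile_eq by blast
qed

lemma enat_split_le:
  fixes a b :: enat
  assumes "enat n \<le> a + b"
  shows "\<exists>n1 n2. n = n1 + n2 \<and> enat n1 \<le> a \<and> enat n2 \<le> b"
proof (cases a)
  case infinity then show ?thesis by (intro exI[of _ n] exI[of _ 0]) (auto simp: zero_enat_def[symmetric])
next
  case (enat a')
  show ?thesis
  proof (cases b)
    case infinity then show ?thesis by (intro exI[of _ 0] exI[of _ n]) (auto simp: zero_enat_def[symmetric])
  next
    case (enat b')
    then show ?thesis using assms \<open>a = enat a'\<close>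
      by (intro exI[of _ "min n a'"] exI[of _ "n - min n a'"]) auto
  qed
qed

lemma L1:
  fixes g :: "'x \<Rightarrow> 'y \<Rightarrow> enat"
  assumes "finite Y" "\<And>y. y \<in> Y \<Longrightarrow> usum (\<lambda>x. g x y) UNIV = h y"
    and "enat n \<le> sum h Y"
  shows "\<exists>X. finite X \<and> enat n \<le> (\<Sum>y\<in>Y. \<Sum>x\<in>X. g x y)"
  using assms
proof (induction Y arbitrary: n rule: finite_induct)
  case empty
  then show ?case by (intro exI[of _ "{}"]) (simp add: zero_enat_def)
next
  case (insert y Y)
  then have "enat n \<le> h y + sum h Y" by simp
  then obtain n1 n2 where n: "n = n1 + n2" "enat n1 \<le> h y" "enat n2 \<le> sum h Y"
    using enat_split_le by blast
  obtain X1 where X1: "finite X1" "enat n1 \<le> (\<Sum>x\<in>X1. g x y)"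
    using usum_enat_ge[of n1 "\<lambda>x. g x y" UNIV] n(2) insert.prems(1)[of y] by auto
  obtain X2 where X2: "finite X2" "enat n2 \<le> (\<Sum>y\<in>Y. \<Sum>x\<in>X2. g x y)"
    using insert.IH[of n2] insert.prems n(3) by auto
  have a: "(\<Sum>x\<in>X1. g x y) \<le> (\<Sum>x\<in>X1 \<union> X2. g x y)"
    using X1 X2 by (intro sum_mono2) auto
  have b: "(\<Sum>y\<in>Y. \<Sum>x\<in>X2. g x y) \<le> (\<Sum>y\<in>Y. \<Sum>x\<in>X1 \<union> X2. g x y)"
    using X1 X2 by (intro sum_mono sum_mono2) auto
  have "enat n = enat n1 + enat n2" using n by simp
  also have "\<dots> \<le> (\<Sum>x\<in>X1 \<union> X2. g x y) + (\<Sum>y\<in>Y. \<Sum>x\<in>X1 \<union> X2. g x y)"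
    using X1 X2 a b by (meson add_mono order_trans)
  also have "\<dots> = (\<Sum>y\<in>insert y Y. \<Sum>x\<in>X1 \<union> X2. g x y)" using insert.hyps by simp
  finally show ?case using X1 X2 by blast
qed

lemma ennreal_le_add_INF:
  fixes c v :: ennreal
  assumes "\<And>a. a \<in> A \<Longrightarrow> c \<le> v + f a"
  shows "c \<le> v + (INF a\<in>A. f a)"
proof (cases "v = top")
  case True then show ?thesis by simp
next
  case False
  have "c - v \<le> (INF a\<in>A. f a)"
  proof (rule INF_greatest)
    fix a assume "a \<in> A"
    then show "c - v \<le> f a" using assms False by (simp add: ennreal_minus_le_iff)
  qed
  then show ?thesis using False by (simp add: ennreal_minus_le_iff)
qed

lemma setdist_le: "a \<in> A \<Longrightarrow> setdist d x A \<le> d x a"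
  unfolding setdist_def by (rule INF_lower)

lemma setdist_tri:
  assumes "ext_metric d"
  shows "setdist d y A \<le> d y x + setdist d x A"
  unfolding setdist_def[of d x A]
proof (rule ennreal_le_add_INF)
  fix a assume "a \<in> A"
  then have "setdist d y A \<le> d y a" by (rule setdist_le)
  also have "\<dots> \<le> d y x + d x a" using assms unfolding ext_metric_def by blast
  finally show "setdist d y A \<le> d y x + d x a" .
qed

lemma setdist_mem: "a \<in> A \<Longrightarrow> setdist d a A \<le> d a a"
  by (rule setdist_le)



definition Rg :: "('a \<Rightarrow> 'a \<Rightarrow> ennreal) \<Rightarrow> 'a set \<Rightarrow> real \<Rightarrow> 'a set" where
  "Rg d A c = {y. ennreal c < setdist d y A}"

lemma setdist_in: "ext_metric d \<Longrightarrow> a \<in> A \<Longrightarrow> setdist d a A = 0"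
  using setdist_le[of a A d a] unfolding ext_metric_def by simp

lemma Rg_notin: "ext_metric d \<Longrightarrow> y \<in> Rg d A c \<Longrightarrow> y \<notin> A"
  using setdist_in[of d y A] unfolding Rg_def by auto

lemma G:
  assumes em: "ext_metric d" and mu: "is_matching A \<gamma> \<gamma>' \<mu>"
    and Y: "finite Y" "Y \<subseteq> Rg d A c" and n: "enat n \<le> sum \<gamma>' Y"
    and s: "0 \<le> s" "s \<le> c"
  shows "\<exists>X Q. finite X \<and> X \<subseteq> Rg d A (c - s) \<and> finite Q \<and> Q \<subseteq> UNIV \<times> Y
     \<and> (\<forall>z\<in>Q. ennreal s \<le> d (fst z) (snd z)) \<and> enat n \<le> sum \<gamma> X + sum \<mu> Q"
proof -
  have marg: "usum (\<lambda>x. \<mu> (x, y)) UNIV = \<gamma>' y" if "y \<in> Y" for y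
    using mu Rg_notin[OF em] Y that unfolding is_matching_def by blast
  obtain X0 where X0: "finite X0" "enat n \<le> (\<Sum>y\<in>Y. \<Sum>x\<in>X0. \<mu> (x, y))"
    using L1[where h=\<gamma>' and g="\<lambda>x y. \<mu> (x, y)" and n=n] Y(1) marg n by blast
  define X where "X = X0 \<inter> Rg d A (c - s)"
  define Q where "Q = (X0 - X) \<times> Y"
  have fin: "finite X" "finite Q" using X0 Y unfolding X_def Q_def by auto
  have e1: "(\<Sum>y\<in>Y. \<Sum>x\<in>X0. \<mu> (x, y)) = (\<Sum>y\<in>Y. (\<Sum>x\<in>X0 - X. \<mu> (x, y)) + (\<Sum>x\<in>X. \<mu> (x, y)))"
    by (intro sum.cong refl sum.subset_diff) (auto simp: X_def X0)
  have e2: "(\<Sum>y\<in>Y. (\<Sum>x\<in>X0 - X. \<mu> (x, y)) + (\<Sum>x\<in>X. \<mu> (x, y))) = (\<Sum>y\<in>Y. \<Sum>x\<in>X0 - X. \<mu> (x, y)) + (\<Sum>y\<in>Y. \<Sum>x\<in>X. \<mu> (x, y))"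
    by (simp add: sum.distrib)
  have e3: "(\<Sum>y\<in>Y. \<Sum>x\<in>X0 - X. \<mu> (x, y)) = sum \<mu> Q"
    unfolding Q_def using X0 Y by (subst sum.swap) (simp add: sum.cartesian_product)
  have e4: "(\<Sum>y\<in>Y. \<Sum>x\<in>X. \<mu> (x, y)) = (\<Sum>x\<in>X. \<Sum>y\<in>Y. \<mu> (x, y))"
    by (rule sum.swap)
  have e5: "(\<Sum>x\<in>X. \<Sum>y\<in>Y. \<mu> (x, y)) \<le> sum \<gamma> X"
  proof (rule sum_mono)
    fix x assume "x \<in> X"
    then have "x \<notin> A" using Rg_notin[OF em] unfolding X_def by auto
    then have "usum (\<lambda>y. \<mu> (x, y)) UNIV = \<gamma> x" using mu unfolding is_matching_def by blast
    moreover have "(\<Sum>y\<in>Y. \<mu> (x, y)) \<le> usum (\<lambda>y. \<mu> (x, y)) UNIV" using Y by (intro usum_ge) auto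
    ultimately show "(\<Sum>y\<in>Y. \<mu> (x, y)) \<le> \<gamma> x" by simp
  qed
  have "(\<Sum>y\<in>Y. \<Sum>x\<in>X0. \<mu> (x, y)) = sum \<mu> Q + (\<Sum>x\<in>X. \<Sum>y\<in>Y. \<mu> (x, y))"
    using e1 e2 e3 e4 by simp
  also have "\<dots> \<le> sum \<mu> Q + sum \<gamma> X" using e5 by (rule add_left_mono)
  finally have le: "enat n \<le> sum \<gamma> X + sum \<mu> Q" using X0(2) by (simp add: add.commute)
  have Qd: "\<forall>z\<in>Q. ennreal s \<le> d (fst z) (snd z)"
  proof
    fix z assume "z \<in> Q"
    then obtain x y where z: "z = (x, y)" "x \<notin> Rg d A (c - s)" "y \<in> Rg d A c"
      unfolding Q_def X_def using Y by auto
    have "ennreal c < setdist d y A" using z unfolding Rg_def by auto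
    also have "\<dots> \<le> d y x + setdist d x A" by (rule setdist_tri[OF em])
    also have "\<dots> \<le> d y x + ennreal (c - s)" using z unfolding Rg_def by (auto intro: add_left_mono)
    finally have lt: "ennreal c < d y x + ennreal (c - s)" .
    show "ennreal s \<le> d (fst z) (snd z)"
    proof (rule ccontr)
      assume "\<not> ?thesis"
      then have "d x y < ennreal s" using z by simp
      moreover have "d y x = d x y" using em unfolding ext_metric_def by blast
      ultimately have "d y x < ennreal s" by simp
      then have "d y x + ennreal (c - s) \<le> ennreal s + ennreal (c - s)" by (intro add_right_mono) simp
      also have "\<dots> = ennreal c" using s by (subst ennreal_plus[symmetric]) auto
      finally show False using lt by simp
    qed
  qed
  show ?thesis
    by (intro exI[of _ X] exI[of _ Q]) (use fin le Qd in \<open>auto simp: X_def Q_def\<close>)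
qed

lemma enn_powr_mono:
  assumes "ennreal s \<le> D" "0 \<le> s" "0 \<le> q"
  shows "ennreal (s powr q) \<le> enn_powr D q"
proof (cases "D = top")
  case True then show ?thesis unfolding enn_powr_def by simp
next
  case False
  then have D: "D = ennreal (enn2real D)" by (simp add: less_top)
  then have "ennreal s \<le> ennreal (enn2real D)" using assms(1) by simp
  then have "s \<le> enn2real D" by (subst (asm) ennreal_le_iff) auto
  then show ?thesis using False assms unfolding enn_powr_def by (auto intro!: ennreal_leI powr_mono2)
qed

lemma CQ:
  assumes "finite Q" "\<forall>z\<in>Q. ennreal s \<le> d (fst z) (snd z)" "0 \<le> s" "0 \<le> q"
  shows "ennreal_of_enat (sum \<mu> Q) * ennreal (s powr q)
     \<le> usum (\<lambda>z. ennreal_of_enat (\<mu> z) * enn_powr (d (fst z) (snd z)) q) UNIV"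
proof -
  have "ennreal_of_enat (sum \<mu> Q) * ennreal (s powr q) = (\<Sum>z\<in>Q. ennreal_of_enat (\<mu> z) * ennreal (s powr q))"
  proof -
    have "ennreal_of_enat (sum \<mu> Q) = (\<Sum>z\<in>Q. ennreal_of_enat (\<mu> z))" by simp
    then show ?thesis by (simp only: sum_distrib_right)
  qed
  also have "\<dots> \<le> (\<Sum>z\<in>Q. ennreal_of_enat (\<mu> z) * enn_powr (d (fst z) (snd z)) q)"
    using assms by (intro sum_mono mult_left_mono enn_powr_mono) auto
  also have "\<dots> \<le> usum (\<lambda>z. ennreal_of_enat (\<mu> z) * enn_powr (d (fst z) (snd z)) q) UNIV"
    using assms by (intro usum_ge) auto
  finally show ?thesis .
qed

lemma Cinf:
  assumes "match_cost top d \<mu> < t" "t \<le> ennreal s" "\<forall>z\<in>Q. ennreal s \<le> d (fst z) (snd z)"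
  shows "sum \<mu> Q = 0"
proof (rule sum.neutral, rule ballI)
  fix z assume "z \<in> Q"
  show "\<mu> z = 0"
  proof (rule ccontr)
    assume "\<mu> z \<noteq> 0"
    then have "z \<in> supp \<mu>" unfolding supp_def by simp
    then have "d (fst z) (snd z) \<le> match_cost top d \<mu>" unfolding match_cost_def by (auto intro: SUP_upper)
    moreover have "ennreal s \<le> d (fst z) (snd z)" using assms(3) \<open>z \<in> Q\<close> by blast
    ultimately have "ennreal s < t" using assms(1) by (meson order.trans order_le_less_trans)
    then show False using assms(2) by simp
  qed
qed

lemma cost_lt:
  assumes "match_cost p d \<mu> < ennreal t" "p \<noteq> top" "enn2real p > 0"
  shows "usum (\<lambda>z. ennreal_of_enat (\<mu> z) * enn_powr (d (fst z) (snd z)) (enn2real p)) UNIV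
     < ennreal (t powr enn2real p)"
proof -
  define C where "C = usum (\<lambda>z. ennreal_of_enat (\<mu> z) * enn_powr (d (fst z) (snd z)) (enn2real p)) UNIV"
  define q where "q = enn2real p"
  have mc: "match_cost p d \<mu> = enn_powr C (1 / q)" unfolding match_cost_def C_def q_def using assms by simp
  have "C \<noteq> top"
  proof
    assume "C = top"
    then have "match_cost p d \<mu> = top" using mc unfolding enn_powr_def by simp
    then show False using assms(1) by simp
  qed
  then have "ennreal (enn2real C powr (1 / q)) < ennreal t" using mc assms(1) unfolding enn_powr_def by simp
  then have "enn2real C powr (1 / q) < t"
    by (subst (asm) ennreal_less_iff) auto
  then have "(enn2real C powr (1 / q)) powr q < t powr q"
    using assms(3) unfolding q_def by (intro powr_less_mono2) auto
  then have "enn2real C < t powr q"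
    using assms(3) unfolding q_def by (simp add: powr_powr)
  then have "ennreal (enn2real C) < ennreal (t powr q)" by (subst ennreal_less_iff) auto
  then show ?thesis using \<open>C \<noteq> top\<close> unfolding C_def q_def by (simp add: less_top)
qed



lemma enat_ex0[simp]: "\<exists>i. enat i = 0"
  by (rule exI[of _ 0]) (simp add: zero_enat_def)

definition sd :: "'a \<Rightarrow> nat \<Rightarrow> 'a fsum" where
  "sd x m = (\<lambda>y. if y = x then enat m else 0)"

definition sm :: "'a \<Rightarrow> 'a \<Rightarrow> nat \<Rightarrow> ('a \<times> 'a) fsum" where
  "sm a x m = (\<lambda>z. if z = (a, x) then enat m else 0)"

lemma supp_sd: "supp (sd x m) \<subseteq> {x}"
  unfolding supp_def sd_def by auto

lemma sd_Dbar: "x \<notin> A \<Longrightarrow> sd x m \<in> Dbar A"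
  unfolding Dbar_def using supp_sd[of x m] countable_subset[of "supp (sd x m)" "{x}"] by auto

lemma sd_Dfin: "x \<notin> A \<Longrightarrow> sd x m \<in> Dfin A"
  unfolding Dfin_def using sd_Dbar[of x A m] supp_sd[of x m] finite_subset[of "supp (sd x m)" "{x}"]
  by (auto simp: sd_def)

lemma zero_Dfin: "zero_diag \<in> Dfin A"
  unfolding Dfin_def Dbar_def supp_def zero_diag_def by auto

lemma supp_sm: "supp (sm a x m) \<subseteq> {(a, x)}"
  unfolding supp_def sm_def by auto

lemma sm_matching:
  assumes "x \<notin> A" "a \<in> A"
  shows "is_matching A zero_diag (sd x m) (sm a x m)"
  unfolding is_matching_def
proof (intro conjI allI impI)
  show "countable (supp (sm a x m))" using supp_sm countable_subset by (metis countable_finite finite.emptyI finite_insert)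
  fix u v assume "sm a x m (u, v) \<noteq> 0"
  then show "\<not> (u \<in> A \<and> v \<in> A)" using assms unfolding sm_def by (auto split: if_splits)
next
  fix u assume "u \<notin> A"
  then have "u \<noteq> a" using assms by auto
  then have "(\<lambda>y. sm a x m (u, y)) = (\<lambda>_. 0)" unfolding sm_def by auto
  then show "usum (\<lambda>y. sm a x m (u, y)) UNIV = zero_diag u" by (simp add: usum_zero zero_diag_def)
next
  fix v assume "v \<notin> A"
  have "usum (\<lambda>u. sm a x m (u, v)) UNIV = sm a x m (a, v)"
    by (rule usum_single) (auto simp: sm_def)
  then show "usum (\<lambda>u. sm a x m (u, v)) UNIV = sd x m v" by (simp add: sm_def sd_def)
qed

lemma sm_matching2:
  assumes "x \<notin> A" "a \<in> A"
  shows "is_matching A (sd x m) zero_diag (sm x a m)"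
  unfolding is_matching_def
proof (intro conjI allI impI)
  show "countable (supp (sm x a m))" using supp_sm countable_subset by (metis countable_finite finite.emptyI finite_insert)
  fix u v assume "sm x a m (u, v) \<noteq> 0"
  then show "\<not> (u \<in> A \<and> v \<in> A)" using assms unfolding sm_def by (auto split: if_splits)
next
  fix v assume "v \<notin> A"
  then have "v \<noteq> a" using assms by auto
  then have "(\<lambda>u. sm x a m (u, v)) = (\<lambda>_. 0)" unfolding sm_def by auto
  then show "usum (\<lambda>u. sm x a m (u, v)) UNIV = zero_diag v" by (simp add: usum_zero zero_diag_def)
next
  fix u assume "u \<notin> A"
  have "usum (\<lambda>y. sm x a m (u, y)) UNIV = sm x a m (u, a)"
    by (rule usum_single) (auto simp: sm_def)
  then show "usum (\<lambda>y. sm x a m (u, y)) UNIV = sd x m u" by (simp add: sm_def sd_def)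
qed

lemma zero_matching: "is_matching A zero_diag zero_diag (\<lambda>_. 0)"
  unfolding is_matching_def supp_def zero_diag_def by (auto simp: usum_zero)

lemma W_le: "is_matching A \<alpha> \<beta> \<mu> \<Longrightarrow> W p d A \<alpha> \<beta> \<le> match_cost p d \<mu>"
  unfolding W_def by (rule INF_lower) simp

lemma W_lt: "W p d A \<alpha> \<beta> < t \<Longrightarrow> \<exists>\<mu>. is_matching A \<alpha> \<beta> \<mu> \<and> match_cost p d \<mu> < t"
  unfolding W_def by (simp add: INF_less_iff)

lemma cost_sm_inf: "match_cost top d (sm a x m) \<le> d a x"
  unfolding match_cost_def using supp_sm[of a x m] by (auto intro!: SUP_least)

lemma cost_sm_fin:
  assumes "p \<noteq> top"
  shows "match_cost p d (sm a x m) = enn_powr (of_nat m * enn_powr (d a x) (enn2real p)) (1 / enn2real p)"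
proof -
  have "usum (\<lambda>z. ennreal_of_enat (sm a x m z) * enn_powr (d (fst z) (snd z)) (enn2real p)) UNIV
      = ennreal_of_enat (sm a x m (a, x)) * enn_powr (d a x) (enn2real p)"
    by (subst usum_single[of "(a, x)"]) (auto simp: sm_def)
  then show ?thesis using assms unfolding match_cost_def by (simp add: sm_def)
qed

lemma cost_zero: "match_cost p d (\<lambda>_. 0) = 0"
proof (cases "p = top")
  case True then show ?thesis unfolding match_cost_def supp_def by (simp add: bot_ennreal)
next
  case False
  have "usum (\<lambda>z::'a\<times>'a. ennreal_of_enat ((\<lambda>_. 0) z) * enn_powr (d (fst z) (snd z)) (enn2real p)) UNIV = 0"
    by (simp add: usum_zero)
  then show ?thesis using False unfolding match_cost_def enn_powr_def by simp
qed

lemma restrict_zero: "restrict_diag zero_diag S = zero_diag"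
  unfolding restrict_diag_def zero_diag_def by auto

lemma card_u_zero: "card_diag (u_part d A \<delta> zero_diag) = 0"
  unfolding card_diag_def u_part_def restrict_zero by (simp add: zero_diag_def usum_zero)

lemma card_u_sd: "card_diag (u_part d A \<delta> (sd x m)) < \<infinity>"
proof -
  have 1: "card_diag (u_part d A \<delta> (sd x m)) = u_part d A \<delta> (sd x m) x"
    unfolding card_diag_def by (rule usum_single) (auto simp: u_part_def restrict_diag_def sd_def)
  have 2: "u_part d A \<delta> (sd x m) x \<le> enat m" unfolding u_part_def restrict_diag_def sd_def by auto
  have 3: "enat m < \<infinity>" by simp
  show ?thesis unfolding 1 using 2 3 by (rule le_less_trans)
qed

lemma zero_Dbar_p: "zero_diag \<in> Dbar_p p d A"
proof -
  have "zero_diag \<in> Dbar A" using zero_Dfin unfolding Dfin_def by auto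
  moreover have "W p d A zero_diag zero_diag < top"
    using W_le[OF zero_matching, of p d] cost_zero[of p d] by (simp add: le_less_trans)
  ultimately show ?thesis unfolding Dbar_p_def l_part_def by (auto simp: card_u_zero restrict_zero)
qed

lemma sd_Dbar_p:
  assumes "x \<notin> A" "a \<in> A" "d x a < top"
  shows "sd x m \<in> Dbar_p p d A"
proof (cases "p = top")
  case True then show ?thesis unfolding Dbar_p_def using sd_Dbar[OF assms(1)] card_u_sd by auto
next
  case False
  have "setdist d x A < top" using setdist_le[OF assms(2), of d x] assms(3) by (simp add: le_less_trans)
  then have l: "l_part d A top (sd x m) = sd x m"
    unfolding l_part_def restrict_diag_def thick_def sd_def using assms(1) by auto
  have "W p d A (sd x m) zero_diag \<le> match_cost p d (sm x a m)"
    by (rule W_le[OF sm_matching2[OF assms(1,2)]])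
  also have "\<dots> < top"
    using False assms(3) unfolding cost_sm_fin[OF False] enn_powr_def
    by (simp add: ennreal_mult_eq_top_iff)
  finally show ?thesis unfolding Dbar_p_def using sd_Dbar[OF assms(1)] card_u_sd False l by auto
qed



lemma pos_setdist:
  assumes "metric_pair d A" "x \<notin> A"
  shows "setdist d x A > 0"
proof -
  have "openin (dist_topology UNIV d) (UNIV - A)"
    using assms(1) unfolding metric_pair_def closedin_def topspace_dt by simp
  then obtain e where e: "e > 0" "{y\<in>UNIV. d x y < e} \<subseteq> UNIV - A"
    using assms(2) unfolding openin_dt by blast
  have "e \<le> setdist d x A" unfolding setdist_def
  proof (rule INF_greatest)
    fix a assume a: "a \<in> A"
    show "e \<le> d x a"
    proof (rule ccontr)
      assume "\<not> e \<le> d x a"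
      then have "d x a < e" by simp
      then have "a \<in> UNIV - A" using e(2) by blast
      then show False using a by simp
    qed
  qed
  then show ?thesis using e by simp
qed

lemma near_point:
  assumes "ext_metric d" "\<not> isolated_set d A" "\<delta> > 0"
  shows "\<exists>x. x \<notin> A \<and> setdist d x A < \<delta>"
proof -
  have "thick d A \<delta> \<noteq> A" using assms(2,3) unfolding isolated_set_def by blast
  moreover have "A \<subseteq> thick d A \<delta>" unfolding thick_def using setdist_in[OF assms(1)] assms(3) by auto
  ultimately show ?thesis unfolding thick_def by auto
qed

lemma near_pair:
  assumes mp: "metric_pair d A" and ni: "\<not> isolated_set d A" and e: "e > 0"
  shows "\<exists>x a r. x \<notin> A \<and> a \<in> A \<and> d x a < e \<and> d x a < top \<and> r > 0 \<and> setdist d x A = ennreal r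
      \<and> d x a < ennreal (2 * r)"
proof -
  have em: "ext_metric d" using mp unfolding metric_pair_def by simp
  obtain x where x: "x \<notin> A" "setdist d x A < min e 1"
    using near_point[OF em ni, of "min e 1"] e by auto
  have pos: "setdist d x A > 0" using pos_setdist[OF mp x(1)] .
  have "setdist d x A < 1" using x(2) by simp
  then have fin: "setdist d x A < top" using ennreal_one_less_top by (rule order.strict_trans)
  define r where "r = enn2real (setdist d x A)"
  have sr: "setdist d x A = ennreal r" unfolding r_def using fin by simp
  have r0: "r > 0" unfolding r_def using pos fin by (simp add: enn2real_positive_iff)
  have "setdist d x A < min (min e 1) (ennreal (2 * r))"
    using x(2) sr r0 by (simp add: ennreal_lessI)
  then have "\<exists>a\<in>A. d x a < min (min e 1) (ennreal (2 * r))"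
    unfolding setdist_def by (simp only: INF_less_iff)
  then obtain a where a: "a \<in> A" "d x a < min (min e 1) (ennreal (2 * r))" by blast
  have "d x a < 1" using a(2) by simp
  then have "d x a < top" using ennreal_one_less_top by (rule order.strict_trans)
  then show ?thesis using x a sr r0 by auto
qed

lemma main_inf:
  fixes d :: "'a \<Rightarrow> 'a \<Rightarrow> ennreal"
  assumes mp: "metric_pair d A" and ni: "\<not> isolated_set d A"
    and S0: "zero_diag \<in> S"
    and Ssd: "\<And>x a m. x \<notin> A \<Longrightarrow> a \<in> A \<Longrightarrow> d x a < top \<Longrightarrow> sd x m \<in> S"
    and Scov: "\<And>\<gamma> c. \<gamma> \<in> S \<Longrightarrow> c > 0 \<Longrightarrow> \<exists>N. \<forall>Y n. finite Y \<and> Y \<subseteq> Rg d A c \<and> enat n \<le> sum \<gamma> Y \<longrightarrow> n \<le> N"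
  shows "\<not> hemicompact (dist_topology S (W top d A))"
proof (rule not_hemi_abstract[OF S0])
  have em: "ext_metric d" using mp unfolding metric_pair_def by simp
  fix e :: ennreal and K assume e: "e > 0" and K: "compactin (dist_topology S (W top d A)) K"
  obtain x a r where xa: "x \<notin> A" "a \<in> A" "d x a < e" "d x a < top" "r > 0" "setdist d x A = ennreal r"
    using near_pair[OF mp ni e] by blast
  define \<alpha> where "\<alpha> k = sd x (Suc k)" for k
  define Op where "Op i = {\<gamma> \<in> S. \<exists>l. 0 < l \<and> l < 1 \<and>
      (\<forall>Y n. finite Y \<and> Y \<subseteq> Rg d A (l * r) \<and> enat n \<le> sum \<gamma> Y \<longrightarrow> n \<le> i)}" for i :: nat
  show "\<exists>\<beta>\<in>S. W top d A zero_diag \<beta> < e \<and> \<beta> \<notin> K"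
  proof (rule not_lc_abstract[OF _ _ _ _ _ K])
    show "\<alpha> j \<in> S" for j unfolding \<alpha>_def using Ssd xa by blast
    show "W top d A zero_diag (\<alpha> j) < e" for j
    proof -
      have "W top d A zero_diag (\<alpha> j) \<le> match_cost top d (sm a x (Suc j))"
        unfolding \<alpha>_def by (rule W_le[OF sm_matching[OF xa(1,2)]])
      also have "\<dots> \<le> d a x" by (rule cost_sm_inf)
      also have "\<dots> = d x a" using em unfolding ext_metric_def by blast
      finally show ?thesis using xa(3) by simp
    qed
    show "S \<subseteq> (\<Union>i. Op i)"
    proof
      fix \<gamma> assume g: "\<gamma> \<in> S"
      obtain N where N: "\<forall>Y n. finite Y \<and> Y \<subseteq> Rg d A (1/2 * r) \<and> enat n \<le> sum \<gamma> Y \<longrightarrow> n \<le> N"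
        using Scov[OF g, of "1/2 * r"] xa(5) by auto
      then have "\<gamma> \<in> Op N" unfolding Op_def using g by (intro CollectI conjI exI[of _ "1/2"]) auto
      then show "\<gamma> \<in> (\<Union>i. Op i)" by blast
    qed
    show "\<alpha> j \<notin> Op i" if ij: "i \<le> j" for i j
    proof
      assume "\<alpha> j \<in> Op i"
      then obtain l where l: "0 < l" "l < 1"
        "\<forall>Y n. finite Y \<and> Y \<subseteq> Rg d A (l * r) \<and> enat n \<le> sum (\<alpha> j) Y \<longrightarrow> n \<le> i"
        unfolding Op_def by blast
      have "x \<in> Rg d A (l * r)" unfolding Rg_def using xa(5,6) l by (simp add: ennreal_lessI)
      moreover have "enat (Suc j) \<le> sum (\<alpha> j) {x}" unfolding \<alpha>_def sd_def by simp
      ultimately have "Suc j \<le> i" using l(3)[rule_format, of "{x}" "Suc j"] by simp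
      then show False using ij by simp
    qed
    show "openin (dist_topology S (W top d A)) (Op i)" for i
      unfolding openin_dt
    proof (intro conjI ballI)
      show "Op i \<subseteq> S" unfolding Op_def by auto
      fix \<gamma> assume "\<gamma> \<in> Op i"
      then obtain l where g: "\<gamma> \<in> S" and l: "0 < l" "l < 1"
        "\<forall>Y n. finite Y \<and> Y \<subseteq> Rg d A (l * r) \<and> enat n \<le> sum \<gamma> Y \<longrightarrow> n \<le> i"
        unfolding Op_def by blast
      define s where "s = (1 - l) * r / 2"
      have s0: "s > 0" unfolding s_def using l xa(5) by simp
      show "\<exists>e>0. {y \<in> S. W top d A \<gamma> y < e} \<subseteq> Op i"
      proof (intro exI[of _ "ennreal s"] conjI subsetI)
        show "ennreal s > 0" using s0 by simp
        fix \<gamma>' assume "\<gamma>' \<in> {y \<in> S. W top d A \<gamma> y < ennreal s}"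
        then have g': "\<gamma>' \<in> S" "W top d A \<gamma> \<gamma>' < ennreal s" by auto
        obtain \<mu> where mu: "is_matching A \<gamma> \<gamma>' \<mu>" "match_cost top d \<mu> < ennreal s"
          using W_lt[OF g'(2)] by blast
        have "\<forall>Y n. finite Y \<and> Y \<subseteq> Rg d A ((1 + l) / 2 * r) \<and> enat n \<le> sum \<gamma>' Y \<longrightarrow> n \<le> i"
        proof (intro allI impI)
          fix Y n assume Y: "finite Y \<and> Y \<subseteq> Rg d A ((1 + l) / 2 * r) \<and> enat n \<le> sum \<gamma>' Y"
          have sc: "s \<le> (1 + l) / 2 * r" unfolding s_def using l xa(5) by (simp add: field_simps)
          obtain X Q where XQ: "finite X" "X \<subseteq> Rg d A ((1 + l) / 2 * r - s)" "finite Q"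
            "\<forall>z\<in>Q. ennreal s \<le> d (fst z) (snd z)" "enat n \<le> sum \<gamma> X + sum \<mu> Q"
            using G[OF em mu(1), of Y "(1 + l) / 2 * r" n s] Y s0 sc by auto
          have "sum \<mu> Q = 0" by (rule Cinf[OF mu(2) order.refl XQ(4)])
          moreover have "(1 + l) / 2 * r - s = l * r" unfolding s_def by (simp add: field_simps)
          ultimately show "n \<le> i" using XQ l(3) by auto
        qed
        then show "\<gamma>' \<in> Op i" unfolding Op_def using g' l
          by (intro CollectI conjI exI[of _ "(1 + l) / 2"]) auto
      qed
    qed
  qed
qed



lemma sum_enat_fin:
  fixes f :: "'b \<Rightarrow> enat"
  assumes "finite F" "\<And>x. f x \<noteq> \<infinity>"
  shows "sum f F \<noteq> \<infinity>"
  using assms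
proof (induction F rule: finite_induct)
  case empty then show ?case by simp
next
  case (insert x F)
  then show ?case by (simp add: plus_eq_infty_iff_enat)
qed

lemma Dfin_cov:
  assumes "\<gamma> \<in> Dfin A"
  shows "\<exists>N. \<forall>Y n. finite Y \<and> enat n \<le> sum \<gamma> Y \<longrightarrow> n \<le> N"
proof -
  have fs: "finite (supp \<gamma>)" and fv: "\<And>x. \<gamma> x \<noteq> \<infinity>" using assms unfolding Dfin_def by auto
  have "sum \<gamma> (supp \<gamma>) \<noteq> \<infinity>" using sum_enat_fin[OF fs] fv by blast
  then obtain N where N: "sum \<gamma> (supp \<gamma>) = enat N" by (cases "sum \<gamma> (supp \<gamma>)") auto
  have "n \<le> N" if Y: "finite Y" "enat n \<le> sum \<gamma> Y" for Y n
  proof -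
    have "sum \<gamma> Y = sum \<gamma> (Y \<inter> supp \<gamma>)"
      using Y(1) by (intro sum.mono_neutral_right) (auto simp: supp_def)
    also have "\<dots> \<le> sum \<gamma> (supp \<gamma>)" using fs by (intro sum_mono2) auto
    finally show ?thesis using Y(2) N by (metis enat_ord_simps(1) order_trans)
  qed
  then show ?thesis by blast
qed

lemma Dbar_inf_cov:
  assumes "\<gamma> \<in> Dbar_p top d A" "c > 0"
  shows "\<exists>N. \<forall>Y n. finite Y \<and> Y \<subseteq> Rg d A c \<and> enat n \<le> sum \<gamma> Y \<longrightarrow> n \<le> N"
proof -
  have "card_diag (u_part d A (ennreal c) \<gamma>) < \<infinity>" using assms unfolding Dbar_p_def by auto
  then obtain N where N: "usum (u_part d A (ennreal c) \<gamma>) UNIV = enat N"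
    unfolding card_diag_def by (cases "usum (u_part d A (ennreal c) \<gamma>) UNIV") auto
  have "n \<le> N" if Y: "finite Y" "Y \<subseteq> Rg d A c" "enat n \<le> sum \<gamma> Y" for Y n
  proof -
    have "sum \<gamma> Y = sum (u_part d A (ennreal c) \<gamma>) Y"
      using Y(2) by (intro sum.cong refl) (auto simp: u_part_def restrict_diag_def thick_def Rg_def)
    also have "\<dots> \<le> usum (u_part d A (ennreal c) \<gamma>) UNIV" using Y(1) by (intro usum_ge) auto
    finally show ?thesis using Y(3) N by (metis enat_ord_simps(1) order_trans)
  qed
  then show ?thesis by blast
qed

lemma thm_inf:
  fixes d :: "'a \<Rightarrow> 'a \<Rightarrow> ennreal"
  assumes mp: "metric_pair d A" and ni: "\<not> isolated_set d A"
  shows "\<not> hemicompact (dist_topology (Dfin A) (W top d A))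
       \<and> \<not> hemicompact (dist_topology (Dbar_p top d A) (W top d A))"
proof
  show "\<not> hemicompact (dist_topology (Dfin A) (W top d A))"
  proof (rule main_inf[OF mp ni zero_Dfin])
    show "sd x m \<in> Dfin A" if "x \<notin> A" for x m using sd_Dfin that .
    show "\<exists>N. \<forall>Y n. finite Y \<and> Y \<subseteq> Rg d A c \<and> enat n \<le> sum \<gamma> Y \<longrightarrow> n \<le> N"
      if "\<gamma> \<in> Dfin A" for \<gamma> c using Dfin_cov[OF that] by blast
  qed
  show "\<not> hemicompact (dist_topology (Dbar_p top d A) (W top d A))"
  proof (rule main_inf[OF mp ni zero_Dbar_p])
    show "sd x m \<in> Dbar_p top d A" if "x \<notin> A" "a \<in> A" "d x a < top" for x a m using sd_Dbar_p that .
    show "\<exists>N. \<forall>Y n. finite Y \<and> Y \<subseteq> Rg d A c \<and> enat n \<le> sum \<gamma> Y \<longrightarrow> n \<le> N"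
      if "\<gamma> \<in> Dbar_p top d A" "c > 0" for \<gamma> c using Dbar_inf_cov[OF that] .
  qed
qed



lemma Hn:
  assumes "enat n \<le> e" "ennreal_of_enat e * ennreal k \<le> X" "X \<le> ennreal B" "0 \<le> k" "0 \<le> B"
  shows "real n * k \<le> B"
proof -
  have "of_nat n \<le> ennreal_of_enat e" using assms(1) by (simp add: of_nat_eq_enat)
  then have "of_nat n * ennreal k \<le> ennreal_of_enat e * ennreal k" by (rule mult_right_mono) simp
  also have "\<dots> \<le> ennreal B" using assms(2,3) by simp
  finally have "ennreal (real n * k) \<le> ennreal B"
    using assms(4) by (simp add: ennreal_mult ennreal_of_nat_eq_real_of_nat)
  then show ?thesis using assms(5) by simp
qed

lemma Tl:
  assumes em: "ext_metric d" and mu: "is_matching A l zero_diag \<mu>"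
    and Y: "finite Y" and c: "c > 0" "\<forall>x\<in>Y. ennreal c \<le> setdist d x A"
    and n: "enat n \<le> sum l Y" and q: "0 \<le> q"
  shows "\<exists>Z. finite Z \<and> enat n \<le> sum \<mu> (Y \<times> Z) \<and>
    ennreal_of_enat (sum \<mu> (Y \<times> Z)) * ennreal (c powr q)
      \<le> (\<Sum>z\<in>Y \<times> Z. ennreal_of_enat (\<mu> z) * enn_powr (d (fst z) (snd z)) q)"
proof -
  have YA: "x \<notin> A" if "x \<in> Y" for x
  proof
    assume "x \<in> A"
    then have "setdist d x A = 0" by (rule setdist_in[OF em])
    then show False using c that by fastforce
  qed
  have marg: "usum (\<lambda>y. \<mu> (x, y)) UNIV = l x" if "x \<in> Y" for x
    using mu YA[OF that] unfolding is_matching_def by blast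
  obtain Z where Z: "finite Z" "enat n \<le> (\<Sum>x\<in>Y. \<Sum>y\<in>Z. \<mu> (x, y))"
    using L1[where h=l and g="\<lambda>y x. \<mu> (x, y)" and n=n and Y=Y] Y marg n by blast
  have sp: "(\<Sum>x\<in>Y. \<Sum>y\<in>Z. \<mu> (x, y)) = sum \<mu> (Y \<times> Z)"
    using Y Z by (simp add: sum.cartesian_product)
  have zero: "\<mu> (x, y) = 0" if "y \<notin> A" for x y
  proof -
    have "usum (\<lambda>x. \<mu> (x, y)) UNIV = 0" using mu that unfolding is_matching_def zero_diag_def by blast
    moreover have "sum (\<lambda>x. \<mu> (x, y)) {x} \<le> usum (\<lambda>x. \<mu> (x, y)) UNIV" by (rule usum_ge) auto
    ultimately show ?thesis by simp
  qed
  have "ennreal_of_enat (sum \<mu> (Y \<times> Z)) * ennreal (c powr q) = (\<Sum>z\<in>Y \<times> Z. ennreal_of_enat (\<mu> z) * ennreal (c powr q))"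
  proof -
    have "ennreal_of_enat (sum \<mu> (Y \<times> Z)) = (\<Sum>z\<in>Y \<times> Z. ennreal_of_enat (\<mu> z))" by simp
    then show ?thesis by (simp only: sum_distrib_right)
  qed
  also have "\<dots> \<le> (\<Sum>z\<in>Y \<times> Z. ennreal_of_enat (\<mu> z) * enn_powr (d (fst z) (snd z)) q)"
  proof (rule sum_mono)
    fix z assume z: "z \<in> Y \<times> Z"
    show "ennreal_of_enat (\<mu> z) * ennreal (c powr q) \<le> ennreal_of_enat (\<mu> z) * enn_powr (d (fst z) (snd z)) q"
    proof (cases "snd z \<in> A")
      case True
      have "ennreal c \<le> setdist d (fst z) A" using c(2) z by auto
      also have "\<dots> \<le> d (fst z) (snd z)" using True by (rule setdist_le)
      finally have "ennreal (c powr q) \<le> enn_powr (d (fst z) (snd z)) q"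
        using c q by (intro enn_powr_mono) auto
      then show ?thesis by (rule mult_left_mono) simp
    next
      case False
      then have "\<mu> z = 0" using zero[of "snd z" "fst z"] by simp
      then show ?thesis by simp
    qed
  qed
  finally show ?thesis using Z sp by auto
qed

lemma TT:
  fixes g :: "'b \<Rightarrow> ennreal"
  assumes "usum g UNIV < top" "\<epsilon> > 0"
  shows "\<exists>F. finite F \<and> (\<forall>Q. finite Q \<and> Q \<inter> F = {} \<longrightarrow> sum g Q \<le> ennreal \<epsilon>)"
proof -
  define C where "C = usum g UNIV"
  define Cr where "Cr = enn2real C"
  have CCr: "C = ennreal Cr" unfolding Cr_def C_def using assms(1) by simp
  show ?thesis
  proof (cases "Cr \<le> \<epsilon>")
    case True
    have "sum g Q \<le> ennreal \<epsilon>" if "finite Q" for Q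
    proof -
      have "sum g Q \<le> C" unfolding C_def using that by (intro usum_ge) auto
      also have "\<dots> \<le> ennreal \<epsilon>" using CCr True by (simp add: ennreal_leI)
      finally show ?thesis .
    qed
    then show ?thesis by blast
  next
    case False
    have "ennreal (Cr - \<epsilon>) < C" using CCr False assms(2) by (subst CCr, subst ennreal_less_iff) auto
    then obtain F where F: "finite F" "ennreal (Cr - \<epsilon>) < sum g F"
      unfolding C_def usum_def by (auto simp: less_SUP_iff)
    have "sum g Q \<le> ennreal \<epsilon>" if Q: "finite Q" "Q \<inter> F = {}" for Q
    proof -
      have "sum g F + sum g Q = sum g (F \<union> Q)" using Q F by (simp add: sum.union_disjoint Int_commute)
      also have "\<dots> \<le> C" unfolding C_def using Q F by (intro usum_ge) auto
      also have "\<dots> = ennreal (Cr - \<epsilon>) + ennreal \<epsilon>" using CCr False assms(2) by (subst ennreal_plus[symmetric]) auto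
      also have "\<dots> \<le> sum g F + ennreal \<epsilon>" using F(2) by (intro add_right_mono) simp
      finally have "sum g F + sum g Q \<le> sum g F + ennreal \<epsilon>" .
      moreover have "sum g F \<noteq> \<infinity>"
      proof -
        have "sum g F \<le> C" unfolding C_def using F by (intro usum_ge) auto
        then show ?thesis using assms(1) unfolding C_def by (auto simp: top_unique)
      qed
      ultimately show ?thesis by (simp add: ennreal_add_left_cancel_le)
    qed
    then show ?thesis using F by blast
  qed
qed



definition Bnd :: "('a \<Rightarrow> 'a \<Rightarrow> ennreal) \<Rightarrow> 'a set \<Rightarrow> 'a fsum \<Rightarrow> real \<Rightarrow> real \<Rightarrow> bool" where
  "Bnd d A \<gamma> c b \<longleftrightarrow> (\<forall>Y n. finite Y \<and> Y \<subseteq> Rg d A c \<and> enat n \<le> sum \<gamma> Y \<longrightarrow> real n \<le> b)"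

lemma Bnd_mono: "Bnd d A \<gamma> c b \<Longrightarrow> b \<le> b' \<Longrightarrow> Bnd d A \<gamma> c b'"
  unfolding Bnd_def by force

lemma Dfin_fcov:
  assumes "\<gamma> \<in> Dfin A" "\<epsilon> > 0"
  shows "\<exists>G0. \<forall>c>0. Bnd d A \<gamma> c (G0 + \<epsilon> / c powr q)"
proof -
  obtain N where N: "\<forall>Y n. finite Y \<and> enat n \<le> sum \<gamma> Y \<longrightarrow> n \<le> N" using Dfin_cov[OF assms(1)] by blast
  have "Bnd d A \<gamma> c (real N + \<epsilon> / c powr q)" if "c > 0" for c
  proof -
    have "Bnd d A \<gamma> c (real N)" unfolding Bnd_def using N by auto
    then show ?thesis by (rule Bnd_mono) (use assms(2) that in auto)
  qed
  then show ?thesis by blast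
qed

lemma Dbar_fcov:
  fixes d :: "'a \<Rightarrow> 'a \<Rightarrow> ennreal"
  assumes mp: "metric_pair d A" and p: "p \<noteq> top" "enn2real p > 0"
    and g: "\<gamma> \<in> Dbar_p p d A" and eps: "\<epsilon> > 0"
  shows "\<exists>G0. \<forall>c>0. Bnd d A \<gamma> c (G0 + \<epsilon> / c powr enn2real p)"
proof -
  define q where "q = enn2real p"
  have q0: "q > 0" using p unfolding q_def by simp
  have em: "ext_metric d" using mp unfolding metric_pair_def by simp
  have cu: "card_diag (u_part d A top \<gamma>) < \<infinity>" and wl: "W p d A (l_part d A top \<gamma>) zero_diag < top"
    using g p unfolding Dbar_p_def by auto
  obtain U where U: "usum (u_part d A top \<gamma>) UNIV = enat U"
    using cu unfolding card_diag_def by (cases "usum (u_part d A top \<gamma>) UNIV") auto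
  obtain \<mu>0 where mu: "is_matching A (l_part d A top \<gamma>) zero_diag \<mu>0" "match_cost p d \<mu>0 < top"
    using W_lt[OF wl] by blast
  define g where "g z = ennreal_of_enat (\<mu>0 z) * enn_powr (d (fst z) (snd z)) q" for z
  define C where "C = usum g UNIV"
  have Cfin: "C < top"
  proof (rule ccontr)
    assume "\<not> C < top"
    then have "C = top" by (simp add: less_top[symmetric])
    then have "match_cost p d \<mu>0 = top" using p unfolding match_cost_def C_def g_def q_def enn_powr_def by simp
    then show False using mu(2) by simp
  qed
  obtain F where F: "finite F" "\<And>Q. finite Q \<Longrightarrow> Q \<inter> F = {} \<Longrightarrow> sum g Q \<le> ennreal \<epsilon>"
    using TT[of g \<epsilon>] Cfin eps unfolding C_def by blast
  have zero: "\<mu>0 (x, y) = 0" if "y \<notin> A" for x y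
  proof -
    have "usum (\<lambda>x. \<mu>0 (x, y)) UNIV = 0" using mu(1) that unfolding is_matching_def zero_diag_def by blast
    moreover have "sum (\<lambda>x. \<mu>0 (x, y)) {x} \<le> usum (\<lambda>x. \<mu>0 (x, y)) UNIV" by (rule usum_ge) auto
    ultimately show ?thesis by simp
  qed
  have nz: "0 < enn2real (setdist d (fst z) A)" if "\<mu>0 z \<noteq> 0" for z
  proof -
    obtain x y where z: "z = (x, y)" by (cases z)
    have "y \<in> A" using zero[of y x] that z by auto
    then have xA: "x \<notin> A" using mu(1) that z unfolding is_matching_def by blast
    have "usum (\<lambda>y. \<mu>0 (x, y)) UNIV = l_part d A top \<gamma> x" using mu(1) xA unfolding is_matching_def by blast
    moreover have "sum (\<lambda>y. \<mu>0 (x, y)) {y} \<le> usum (\<lambda>y. \<mu>0 (x, y)) UNIV" by (rule usum_ge) auto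
    ultimately have "l_part d A top \<gamma> x \<noteq> 0" using that z by (auto simp: le_zero_eq)
    then have "setdist d x A < top" unfolding l_part_def restrict_diag_def thick_def by (auto split: if_splits)
    moreover have "setdist d x A > 0" by (rule pos_setdist[OF mp xA])
    ultimately show ?thesis using z by (simp add: enn2real_positive_iff)
  qed
  define H where "H = (\<lambda>z. enn2real (setdist d (fst z) A)) ` {z\<in>F. \<mu>0 z \<noteq> 0}"
  define \<eta> where "\<eta> = Min (insert 1 H)"
  have Hfin: "finite H" unfolding H_def using F(1) by simp
  have eta0: "\<eta> > 0" unfolding \<eta>_def using Hfin nz by (auto simp: Min_gr_iff H_def)
  have eta1: "\<eta> \<le> 1" unfolding \<eta>_def using Hfin by simp
  have key: "\<mu>0 z = 0" if "z \<in> F" "setdist d (fst z) A < ennreal \<eta>" for z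
  proof (rule ccontr)
    assume nz0: "\<mu>0 z \<noteq> 0"
    then have "enn2real (setdist d (fst z) A) \<in> H" unfolding H_def using that by auto
    then have "\<eta> \<le> enn2real (setdist d (fst z) A)" unfolding \<eta>_def using Hfin by simp
    then have "ennreal \<eta> \<le> ennreal (enn2real (setdist d (fst z) A))" by (rule ennreal_leI)
    also have "\<dots> = setdist d (fst z) A"
    proof -
      have "setdist d (fst z) A < top" using that(2) ennreal_less_top by (rule order.strict_trans)
      then show ?thesis by simp
    qed
    finally show False using that(2) by simp
  qed
  define Cr where "Cr = enn2real C"
  have CCr: "C = ennreal Cr" unfolding Cr_def using Cfin by simp
  have "Bnd d A \<gamma> c (real U + Cr / \<eta> powr q + \<epsilon> / c powr q)" if c: "c > 0" for c
    unfolding Bnd_def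
  proof (intro allI impI)
    fix Y n assume Yn: "finite Y \<and> Y \<subseteq> Rg d A c \<and> enat n \<le> sum \<gamma> Y"
    then have Y: "finite Y" "Y \<subseteq> Rg d A c" "enat n \<le> sum \<gamma> Y" by auto
    define YU where "YU = {y\<in>Y. setdist d y A = top}"
    define YM where "YM = {y\<in>Y. setdist d y A < top \<and> ennreal \<eta> \<le> setdist d y A}"
    define YT where "YT = {y\<in>Y. setdist d y A < ennreal \<eta>}"
    have fins: "finite YU" "finite YM" "finite YT" using Y(1) unfolding YU_def YM_def YT_def by auto
    have s1: "sum \<gamma> Y = sum \<gamma> YU + sum \<gamma> (Y - YU)"
      using Y(1) by (subst sum.subset_diff[of YU Y]) (auto simp: YU_def add.commute)
    have "Y - YU = YM \<union> YT" unfolding YU_def YM_def YT_def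
      using eta1 by (auto simp: top.not_eq_extremum not_le)
    moreover have "YM \<inter> YT = {}" unfolding YM_def YT_def by auto
    ultimately have s2: "sum \<gamma> (Y - YU) = sum \<gamma> YM + sum \<gamma> YT" using fins by (simp add: sum.union_disjoint)
    have notA: "y \<notin> A" if "y \<in> Y" for y using Rg_notin[OF em] Y(2) that by auto
    have lp: "\<gamma> y = l_part d A top \<gamma> y" if "y \<in> YM \<union> YT" for y
    proof -
      have "setdist d y A < top" using that eta1 unfolding YM_def YT_def
        by (auto intro: order.strict_trans2[OF _ ennreal_less_top[of \<eta>, THEN less_imp_le]] simp: less_top[symmetric])
      then show ?thesis using notA that unfolding l_part_def restrict_diag_def thick_def YM_def YT_def by auto
    qed
    have "enat n \<le> sum \<gamma> YU + (sum \<gamma> YM + sum \<gamma> YT)" using Y(3) s1 s2 by simp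
    then obtain n1 n23 where n1: "n = n1 + n23" "enat n1 \<le> sum \<gamma> YU" "enat n23 \<le> sum \<gamma> YM + sum \<gamma> YT"
      using enat_split_le by blast
    then obtain n2 n3 where n2: "n23 = n2 + n3" "enat n2 \<le> sum \<gamma> YM" "enat n3 \<le> sum \<gamma> YT"
      using enat_split_le by blast
    have b1: "real n1 \<le> real U"
    proof -
      have "sum \<gamma> YU = sum (u_part d A top \<gamma>) YU"
        by (intro sum.cong refl) (auto simp: u_part_def restrict_diag_def thick_def YU_def)
      also have "\<dots> \<le> enat U" unfolding U[symmetric] using fins by (intro usum_ge) auto
      finally show ?thesis using n1(2) by (metis enat_ord_simps(1) of_nat_le_iff order_trans)
    qed
    have b2: "real n2 \<le> Cr / \<eta> powr q"
    proof -
      have "enat n2 \<le> sum (l_part d A top \<gamma>) YM" using n2(2) lp by (metis (no_types, lifting) UnI1 sum.cong)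
      moreover have "\<forall>x\<in>YM. ennreal \<eta> \<le> setdist d x A" unfolding YM_def by auto
      ultimately obtain Z where Z: "finite Z" "enat n2 \<le> sum \<mu>0 (YM \<times> Z)"
        "ennreal_of_enat (sum \<mu>0 (YM \<times> Z)) * ennreal (\<eta> powr q) \<le> (\<Sum>z\<in>YM \<times> Z. g z)"
        using Tl[OF em mu(1) fins(2) eta0, of n2 q] q0 unfolding g_def by auto
      have "(\<Sum>z\<in>YM \<times> Z. g z) \<le> C" unfolding C_def using Z fins by (intro usum_ge) auto
      moreover have "0 \<le> Cr" unfolding Cr_def by simp
      ultimately have "real n2 * \<eta> powr q \<le> Cr" using Hn[OF Z(2) Z(3)] CCr by simp
      then show ?thesis using eta0 by (simp add: pos_le_divide_eq)
    qed
    have b3: "real n3 \<le> \<epsilon> / c powr q"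
    proof -
      have "enat n3 \<le> sum (l_part d A top \<gamma>) YT" using n2(3) lp by (metis (no_types, lifting) UnI2 sum.cong)
      moreover have "\<forall>x\<in>YT. ennreal c \<le> setdist d x A" using Y(2) unfolding YT_def Rg_def by (auto intro: less_imp_le)
      ultimately obtain Z where Z: "finite Z" "enat n3 \<le> sum \<mu>0 (YT \<times> Z)"
        "ennreal_of_enat (sum \<mu>0 (YT \<times> Z)) * ennreal (c powr q) \<le> (\<Sum>z\<in>YT \<times> Z. g z)"
        using Tl[OF em mu(1) fins(3) c, of n3 q] q0 unfolding g_def by auto
      define Q where "Q = {z \<in> YT \<times> Z. \<mu>0 z \<noteq> 0}"
      have "(\<Sum>z\<in>YT \<times> Z. g z) = sum g Q"
        unfolding Q_def g_def using fins Z by (intro sum.mono_neutral_right) auto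
      also have "\<dots> \<le> ennreal \<epsilon>"
      proof (rule F(2))
        show "finite Q" unfolding Q_def using fins Z by simp
        show "Q \<inter> F = {}"
        proof (rule ccontr)
          assume "Q \<inter> F \<noteq> {}"
          then obtain z where z: "z \<in> Q" "z \<in> F" by blast
          then have "setdist d (fst z) A < ennreal \<eta>" unfolding Q_def YT_def by auto
          then have "\<mu>0 z = 0" using key z(2) by blast
          then show False using z(1) unfolding Q_def by simp
        qed
      qed
      finally have "real n3 * c powr q \<le> \<epsilon>" using Hn[OF Z(2) Z(3)] eps by simp
      then show ?thesis using c by (simp add: pos_le_divide_eq)
    qed
    show "real n \<le> real U + Cr / \<eta> powr q + \<epsilon> / c powr q" using n1(1) n2(1) b1 b2 b3 by simp
  qed
  then show ?thesis unfolding q_def by blast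
qed



lemma seqpt:
  fixes d :: "'a \<Rightarrow> 'a \<Rightarrow> ennreal"
  assumes mp: "metric_pair d A" and ni: "\<not> isolated_set d A"
    and p: "p \<noteq> top" and q1: "1 \<le> enn2real p" and e0: "e0 > 0"
  shows "\<exists>x a r m. x \<notin> A \<and> a \<in> A \<and> d x a < top \<and> r > 0 \<and> setdist d x A = ennreal r
     \<and> k + 1 \<le> m \<and> e0 powr enn2real p / (4 * 2 powr enn2real p) \<le> real m * r powr enn2real p
     \<and> match_cost p d (sm a x m) < ennreal e0"
proof -
  define q where "q = enn2real p"
  have q0: "q > 0" using q1 unfolding q_def by simp
  have em: "ext_metric d" using mp unfolding metric_pair_def by simp
  define B where "B = e0 powr q / (4 * (k + 1))"
  have B0: "B > 0" unfolding B_def using e0 by simp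
  define \<delta> where "\<delta> = B powr (1 / q)"
  have d0: "\<delta> > 0" unfolding \<delta>_def using B0 by simp
  obtain x a r where xa: "x \<notin> A" "a \<in> A" "d x a < ennreal \<delta>" "d x a < top" "r > 0"
    "setdist d x A = ennreal r" "d x a < ennreal (2 * r)"
    using near_pair[OF mp ni, of "ennreal \<delta>"] d0 by auto
  define D where "D = enn2real (d x a)"
  have dD: "d x a = ennreal D" unfolding D_def using xa(4) by simp
  have rD: "r \<le> D"
  proof -
    have "ennreal r \<le> ennreal D" using setdist_le[OF xa(2), of d x] xa(6) dD by simp
    then show ?thesis using xa(5) by (subst (asm) ennreal_le_iff) (auto simp: D_def)
  qed
  have D0: "D > 0" using rD xa(5) by simp
  have Dnn: "0 \<le> D" unfolding D_def by simp
  have Dd: "D < \<delta>" using xa(3) dD by (simp add: ennreal_less_iff[OF Dnn])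
  have D2r: "D < 2 * r" using xa(7) dD by (simp add: ennreal_less_iff[OF Dnn])
  have DqB: "D powr q < B"
  proof -
    have "D powr q < \<delta> powr q" using Dd D0 q0 by (intro powr_less_mono2) auto
    also have "\<delta> powr q = B" unfolding \<delta>_def using B0 q0 by (simp add: powr_powr)
    finally show ?thesis .
  qed
  have Dq0: "D powr q > 0" using D0 by simp
  define M where "M = e0 powr q / (2 * D powr q)"
  have M1: "M > 2 * (k + 1)"
  proof -
    have "2 * (k + 1) * (2 * D powr q) < 2 * (k + 1) * (2 * B)" using DqB by simp
    also have "\<dots> = e0 powr q" unfolding B_def by (simp add: field_simps)
    finally show ?thesis unfolding M_def using Dq0 by (simp add: field_simps)
  qed
  define m where "m = nat \<lfloor>M\<rfloor>"
  have mM: "real m \<le> M" "real m > M - 1" unfolding m_def using M1 by (auto simp: of_nat_nat)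
  have "real (2 * k + 1) < real m" using mM M1 by simp
  then have km: "k + 1 \<le> m" by linarith
  have "real (2 * (k + 1)) \<ge> 2" by simp
  then have M2: "M \<ge> 2" using M1 by linarith
  have mM2: "real m \<ge> M / 2" using mM M2 by linarith
  have E: "e0 powr q / (4 * 2 powr q) \<le> real m * r powr q"
  proof -
    have "(D / 2) powr q \<le> r powr q" using D2r D0 q0 by (intro powr_mono2) auto
    then have rq: "D powr q / 2 powr q \<le> r powr q" using D0 by (simp add: powr_divide)
    have "e0 powr q / (4 * 2 powr q) = (M / 2) * (D powr q / 2 powr q)"
      unfolding M_def using Dq0 by (simp add: field_simps)
    also have "\<dots> \<le> real m * r powr q" using mM2 rq M2 Dq0 by (intro mult_mono) auto
    finally show ?thesis .
  qed
  have cost: "match_cost p d (sm a x m) < ennreal e0"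
  proof -
    have dax: "d a x = ennreal D" using dD em unfolding ext_metric_def by metis
    have "enn_powr (d a x) q = ennreal (D powr q)" unfolding dax enn_powr_def using D0 by simp
    then have "of_nat m * enn_powr (d a x) q = ennreal (real m * D powr q)"
      by (simp add: ennreal_mult ennreal_of_nat_eq_real_of_nat)
    then have mc: "match_cost p d (sm a x m) = ennreal ((real m * D powr q) powr (1 / q))"
      unfolding cost_sm_fin[OF p] q_def[symmetric] enn_powr_def
      using D0 by (simp add: enn2real_ennreal)
    have "real m * D powr q \<le> M * D powr q" using mM Dq0 by (intro mult_right_mono) auto
    also have "\<dots> = e0 powr q / 2" unfolding M_def using Dq0 by simp
    also have "\<dots> < e0 powr q" using e0 by simp
    finally have "(real m * D powr q) powr (1 / q) < (e0 powr q) powr (1 / q)"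
      using q0 by (intro powr_less_mono2) auto
    also have "\<dots> = e0" using q0 e0 by (simp add: powr_powr)
    finally show ?thesis unfolding mc by (intro ennreal_lessI) (use e0 in auto)
  qed
  show ?thesis using xa km E cost unfolding q_def by blast
qed



lemma main_fin:
  fixes d :: "'a \<Rightarrow> 'a \<Rightarrow> ennreal"
  assumes mp: "metric_pair d A" and ni: "\<not> isolated_set d A"
    and p: "p \<noteq> top" and q1: "1 \<le> enn2real p"
    and S0: "zero_diag \<in> S"
    and Ssd: "\<And>x a m. x \<notin> A \<Longrightarrow> a \<in> A \<Longrightarrow> d x a < top \<Longrightarrow> sd x m \<in> S"
    and Scov: "\<And>\<gamma> \<epsilon>. \<gamma> \<in> S \<Longrightarrow> \<epsilon> > 0 \<Longrightarrow> \<exists>G0. \<forall>c>0. Bnd d A \<gamma> c (G0 + \<epsilon> / c powr enn2real p)"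
  shows "\<not> hemicompact (dist_topology S (W p d A))"
proof (rule not_hemi_abstract[OF S0])
  define q where "q = enn2real p"
  have q0: "q > 0" using q1 unfolding q_def by simp
  have em: "ext_metric d" using mp unfolding metric_pair_def by simp
  fix e :: ennreal and K assume e: "e > 0" and K: "compactin (dist_topology S (W p d A)) K"
  obtain e0 where e0: "e0 > 0" "ennreal e0 \<le> e"
  proof (cases "e = top")
    case True then show ?thesis using that[of 1] by simp
  next
    case False
    then have "enn2real e > 0" using e by (simp add: enn2real_positive_iff less_top)
    moreover have "ennreal (enn2real e) \<le> e" using False by (simp add: less_top)
    ultimately show ?thesis using that by blast
  qed
  define E where "E = e0 powr q / (4 * 2 powr q)"
  have E0: "E > 0" unfolding E_def using e0 by simp
  have "\<forall>k. \<exists>x a r m. x \<notin> A \<and> a \<in> A \<and> d x a < top \<and> r > 0 \<and> setdist d x A = ennreal r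
     \<and> k + 1 \<le> m \<and> E \<le> real m * r powr q \<and> match_cost p d (sm a x m) < ennreal e0"
    using seqpt[OF mp ni p q1 e0(1)] unfolding E_def q_def by blast
  then have "\<exists>x a r m. \<forall>k. x k \<notin> A \<and> a k \<in> A \<and> d (x k) (a k) < top \<and> r k > 0 \<and> setdist d (x k) A = ennreal (r k)
     \<and> k + 1 \<le> m k \<and> E \<le> real (m k) * r k powr q \<and> match_cost p d (sm (a k) (x k) (m k)) < ennreal e0"
    by (simp only: choice_iff)
  then obtain x a r m where xa: "\<And>k. x k \<notin> A" "\<And>k. a k \<in> A" "\<And>k. d (x k) (a k) < top"
    "\<And>k. r k > 0" "\<And>k. setdist d (x k) A = ennreal (r k)" "\<And>k. k + 1 \<le> m k"
    "\<And>k. E \<le> real (m k) * r k powr q" "\<And>k. match_cost p d (sm (a k) (x k) (m k)) < ennreal e0"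
    by blast
  define \<alpha> where "\<alpha> k = sd (x k) (m k)" for k
  define Op where "Op K = {\<gamma> \<in> S. \<exists>l \<theta>. 0 < l \<and> l < 1 \<and> \<theta> < 1/2 \<and>
      (\<forall>k\<ge>K. Bnd d A \<gamma> (l * r k) (\<theta> * real (m k)))}" for K :: nat
  show "\<exists>\<beta>\<in>S. W p d A zero_diag \<beta> < e \<and> \<beta> \<notin> K"
  proof (rule not_lc_abstract[OF _ _ _ _ _ K])
    show "\<alpha> j \<in> S" for j unfolding \<alpha>_def using Ssd xa by blast
    show "W p d A zero_diag (\<alpha> j) < e" for j
    proof -
      have "W p d A zero_diag (\<alpha> j) \<le> match_cost p d (sm (a j) (x j) (m j))"
        unfolding \<alpha>_def by (rule W_le[OF sm_matching[OF xa(1,2)]])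
      also have "\<dots> < ennreal e0" by (rule xa(8))
      finally show ?thesis using e0(2) by simp
    qed
    show "\<alpha> j \<notin> Op i" if ij: "i \<le> j" for i j
    proof
      assume "\<alpha> j \<in> Op i"
      then obtain l \<theta> where l: "0 < l" "l < 1" "\<theta> < 1/2" "Bnd d A (\<alpha> j) (l * r j) (\<theta> * real (m j))"
        unfolding Op_def using ij by blast
      have "x j \<in> Rg d A (l * r j)" unfolding Rg_def using xa(4,5)[of j] l by (simp add: ennreal_lessI)
      moreover have "enat (m j) \<le> sum (\<alpha> j) {x j}" unfolding \<alpha>_def sd_def by simp
      ultimately have "real (m j) \<le> \<theta> * real (m j)" using l(4) unfolding Bnd_def by blast
      moreover have "real (m j) \<ge> 1" using xa(6)[of j] by simp
      ultimately have "1 \<le> \<theta>" by simp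
      then show False using l(3) by simp
    qed
    show "S \<subseteq> (\<Union>i. Op i)"
    proof
      fix \<gamma> assume g: "\<gamma> \<in> S"
      define \<epsilon> where "\<epsilon> = E / (8 * 2 powr q)"
      have eps0: "\<epsilon> > 0" unfolding \<epsilon>_def using E0 by simp
      obtain G0 where G0: "\<forall>c>0. Bnd d A \<gamma> c (G0 + \<epsilon> / c powr q)" using Scov[OF g eps0] unfolding q_def by blast
      define K0 where "K0 = nat \<lceil>8 * G0\<rceil>"
      have "Bnd d A \<gamma> (1/2 * r k) (1/4 * real (m k))" if k: "k \<ge> K0" for k
      proof -
        have rk: "r k > 0" by (rule xa(4))
        have B: "Bnd d A \<gamma> (1/2 * r k) (G0 + \<epsilon> / (1/2 * r k) powr q)" using G0 rk by simp
        have "8 * G0 \<le> real K0" unfolding K0_def by (rule real_nat_ceiling_ge)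
        also have "\<dots> \<le> real (m k)" using k xa(6)[of k] by simp
        finally have g1: "G0 \<le> real (m k) / 8" by simp
        have "(1/2 * r k) powr q = r k powr q / 2 powr q" using rk by (simp add: powr_divide)
        then have "\<epsilon> / (1/2 * r k) powr q = E / (8 * r k powr q)"
          unfolding \<epsilon>_def by (simp add: field_simps)
        also have "\<dots> \<le> real (m k) * r k powr q / (8 * r k powr q)"
          using xa(7)[of k] rk by (intro divide_right_mono) auto
        also have "\<dots> = real (m k) / 8" using rk by simp
        finally have g2: "\<epsilon> / (1/2 * r k) powr q \<le> real (m k) / 8" .
        show ?thesis using B by (rule Bnd_mono) (use g1 g2 in linarith)
      qed
      then have "\<gamma> \<in> Op K0" unfolding Op_def using g
        by (intro CollectI conjI exI[of _ "1/2"] exI[of _ "1/4"]) auto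
      then show "\<gamma> \<in> (\<Union>i. Op i)" by blast
    qed
    show "openin (dist_topology S (W p d A)) (Op i)" for i
      unfolding openin_dt
    proof (intro conjI ballI)
      show "Op i \<subseteq> S" unfolding Op_def by auto
      fix \<gamma> assume "\<gamma> \<in> Op i"
      then obtain l \<theta> where g: "\<gamma> \<in> S" and l: "0 < l" "l < 1" "\<theta> < 1/2"
        "\<forall>k\<ge>i. Bnd d A \<gamma> (l * r k) (\<theta> * real (m k))"
        unfolding Op_def by blast
      define l' where "l' = (1 + l) / 2"
      define \<theta>' where "\<theta>' = (\<theta> + 1/2) / 2"
      define a0 where "a0 = ((1 - l) / 2) powr q"
      have a00: "a0 > 0" unfolding a0_def using l by simp
      define T where "T = (\<theta>' - \<theta>) * E * a0"
      have T0: "T > 0" unfolding T_def \<theta>'_def using l E0 a00 by simp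
      define t where "t = T powr (1 / q)"
      have t0: "t > 0" unfolding t_def using T0 by simp
      have tq: "t powr q = T" unfolding t_def using T0 q0 by (simp add: powr_powr)
      show "\<exists>e>0. {y \<in> S. W p d A \<gamma> y < e} \<subseteq> Op i"
      proof (intro exI[of _ "ennreal t"] conjI subsetI)
        show "ennreal t > 0" using t0 by simp
        fix \<gamma>' assume "\<gamma>' \<in> {y \<in> S. W p d A \<gamma> y < ennreal t}"
        then have g': "\<gamma>' \<in> S" "W p d A \<gamma> \<gamma>' < ennreal t" by auto
        obtain \<mu> where mu: "is_matching A \<gamma> \<gamma>' \<mu>" "match_cost p d \<mu> < ennreal t"
          using W_lt[OF g'(2)] by blast
        have cl: "usum (\<lambda>z. ennreal_of_enat (\<mu> z) * enn_powr (d (fst z) (snd z)) q) UNIV < ennreal T"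
          using cost_lt[OF mu(2) p] q0 tq unfolding q_def by simp
        have "Bnd d A \<gamma>' (l' * r k) (\<theta>' * real (m k))" if k: "k \<ge> i" for k
          unfolding Bnd_def
        proof (intro allI impI)
          fix Y n assume Y: "finite Y \<and> Y \<subseteq> Rg d A (l' * r k) \<and> enat n \<le> sum \<gamma>' Y"
          have rk: "r k > 0" by (rule xa(4))
          define s where "s = (1 - l) / 2 * r k"
          have s0: "s > 0" unfolding s_def using l rk by simp
          have sc: "s \<le> l' * r k" unfolding s_def l'_def using l rk by (simp add: field_simps)
          obtain X Q where XQ: "finite X" "X \<subseteq> Rg d A (l' * r k - s)" "finite Q"
            "\<forall>z\<in>Q. ennreal s \<le> d (fst z) (snd z)" "enat n \<le> sum \<gamma> X + sum \<mu> Q"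
            using G[OF em mu(1), of Y "l' * r k" n s] Y s0 sc by auto
          have lrs: "l' * r k - s = l * r k" unfolding s_def l'_def by (simp add: field_simps)
          obtain n1 n2 where n: "n = n1 + n2" "enat n1 \<le> sum \<gamma> X" "enat n2 \<le> sum \<mu> Q"
            using enat_split_le[OF XQ(5)] by blast
          have b1: "real n1 \<le> \<theta> * real (m k)"
            using l(4) k XQ(1,2) n(2) lrs unfolding Bnd_def by auto
          have "real n2 * s powr q \<le> T"
            using Hn[OF n(3) CQ[OF XQ(3) XQ(4), of q \<mu>] less_imp_le[OF cl]] s0 T0 q0 by simp
          moreover have "s powr q = a0 * r k powr q" unfolding s_def a0_def using l rk by (intro powr_mult)
          ultimately have "(real n2 * r k powr q) * a0 \<le> ((\<theta>' - \<theta>) * E) * a0"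
            unfolding T_def by (simp add: algebra_simps)
          then have "real n2 * r k powr q \<le> (\<theta>' - \<theta>) * E" using a00 by (simp add: mult_le_cancel_right_pos)
          also have "\<dots> \<le> (\<theta>' - \<theta>) * (real (m k) * r k powr q)"
            using xa(7)[of k] l(3) unfolding \<theta>'_def by (intro mult_left_mono) auto
          finally have "real n2 * r k powr q \<le> ((\<theta>' - \<theta>) * real (m k)) * r k powr q" by (simp add: algebra_simps)
          then have b2: "real n2 \<le> (\<theta>' - \<theta>) * real (m k)" using rk by (simp add: mult_le_cancel_right_pos)
          show "real n \<le> \<theta>' * real (m k)" using n(1) b1 b2 by (simp add: algebra_simps)
        qed
        moreover have "0 < l'" "l' < 1" "\<theta>' < 1/2" unfolding l'_def \<theta>'_def using l by auto
        ultimately show "\<gamma>' \<in> Op i" unfolding Op_def using g' by blast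
      qed
    qed
  qed
qed



theorem theorem7p21:
  fixes d :: "'a \<Rightarrow> 'a \<Rightarrow> ennreal" and A :: "'a set" and p :: ennreal
  assumes "metric_pair d A"
    and "\<not> isolated_set d A"
    and "1 \<le> p"
  shows "\<not> hemicompact (dist_topology (Dfin A) (W p d A))
       \<and> \<not> hemicompact (dist_topology (Dbar_p p d A) (W p d A))"
proof (cases "p = top")
  case True
  then show ?thesis using thm_inf[OF assms(1,2)] by simp
next
  case False
  have "ennreal 1 \<le> ennreal (enn2real p)" using assms(3) False by (simp add: less_top)
  then have q1: "1 \<le> enn2real p" by (subst (asm) ennreal_le_iff) auto
  have q0: "enn2real p > 0" using q1 by simp
  show ?thesis
  proof
    show "\<not> hemicompact (dist_topology (Dfin A) (W p d A))"
    proof (rule main_fin[OF assms(1,2) False q1 zero_Dfin])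
      show "sd x m \<in> Dfin A" if "x \<notin> A" for x m using sd_Dfin that .
      show "\<exists>G0. \<forall>c>0. Bnd d A \<gamma> c (G0 + \<epsilon> / c powr enn2real p)"
        if "\<gamma> \<in> Dfin A" "\<epsilon> > 0" for \<gamma> \<epsilon> using Dfin_fcov[OF that] by blast
    qed
    show "\<not> hemicompact (dist_topology (Dbar_p p d A) (W p d A))"
    proof (rule main_fin[OF assms(1,2) False q1 zero_Dbar_p])
      show "sd x m \<in> Dbar_p p d A" if "x \<notin> A" "a \<in> A" "d x a < top" for x a m using sd_Dbar_p that .
      show "\<exists>G0. \<forall>c>0. Bnd d A \<gamma> c (G0 + \<epsilon> / c powr enn2real p)"
        if "\<gamma> \<in> Dbar_p p d A" "\<epsilon> > 0" for \<gamma> \<epsilon> using Dbar_fcov[OF assms(1) False q0 that] .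
    qed
  qed
qed

end
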